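(* Let $\mathbf a=(a_0,a_1,\dots)\in\mathbb{R}^{\mathbb{N}}$ with $a_0=0$. The linear centrality $f^{\mathbf a}$ is score monotone if and only if $\mathbf a\ge 0$, $\Delta\mathbf a\le 0$ and $(\Delta\mathbf a)_1<0$; equivalently, $a_1>a_2$ and $a_i\ge a_{i+1}\ge 0$ for all $i\ge 1$.
   Context: Graphs are finite directed graphs; $d_G(x,y)$ is the shortest directed path length from $x$ to $y$ ($\infty$ if none). The linear centrality is $f^{\mathbf a}_G(i)=\sum_{z\in V_G,\ d_G(z,i)<\infty}a_{d_G(z,i)}$. A centrality $f$ is score monotone if for every graph $G$ and every pair of distinct nodes $x,y$ with $(x,y)\notin E_G$, letting $G'$ be $G$ with the arc $x\to y$ added, $f_{G'}(y)>f_G(y)$. For a sequence $\mathbf a$, $\Delta\mathbf a$ is the sequence with $(\Delta\mathbf a)_0=0$ and $(\Delta\mathbf a)_i=a_{i+1}-a_i$ for $i>0$; $\mathbf a\ge0$ ($\le 0$) means every entry is $\ge0$ ($\le0$). *)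

theory Defs
  imports Main "HOL-Library.Extended_Nat"
begin

definition is_graph :: "nat set \<Rightarrow> (nat \<times> nat) set \<Rightarrow> bool" where
  "is_graph V E \<longleftrightarrow> finite V \<and> E \<subseteq> V \<times> V"

definition gdist :: "(nat \<times> nat) set \<Rightarrow> nat \<Rightarrow> nat \<Rightarrow> enat" where
  "gdist E x y = (if \<exists>n. (x, y) \<in> E ^^ n then enat (LEAST n. (x, y) \<in> E ^^ n) else \<infinity>)"

definition lin_cent :: "(nat \<Rightarrow> real) \<Rightarrow> nat set \<Rightarrow> (nat \<times> nat) set \<Rightarrow> nat \<Rightarrow> real" where
  "lin_cent a V E i = (\<Sum>z \<in> {z \<in> V. gdist E z i < \<infinity>}. a (the_enat (gdist E z i)))"

definition score_monotone ::
  "(nat set \<Rightarrow> (nat \<times> nat) set \<Rightarrow> nat \<Rightarrow> real) \<Rightarrow> bool" where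
  "score_monotone f \<longleftrightarrow>
     (\<forall>V E x y. is_graph V E \<and> x \<in> V \<and> y \<in> V \<and> x \<noteq> y \<and> (x, y) \<notin> E
        \<longrightarrow> f V (insert (x, y) E) y > f V E y)"

definition Delta :: "(nat \<Rightarrow> real) \<Rightarrow> nat \<Rightarrow> real" where
  "Delta a i = (if i = 0 then 0 else a (i + 1) - a i)"

end

theory Submission
  imports Defs
begin

lemma relpow_mono_set:
  fixes E E' :: "'a rel"
  assumes "E \<subseteq> E'" shows "E ^^ n \<subseteq> E' ^^ n"
  using assms by (induction n) (simp_all add: relcomp_mono)

lemma relpow_mono':
  fixes E E' :: "'a rel"
  shows "E \<subseteq> E' \<Longrightarrow> (u, v) \<in> E ^^ n \<Longrightarrow> (u, v) \<in> E' ^^ n"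
  using relpow_mono_set by blast

lemma gdist_fin: "gdist E z y < \<infinity> \<longleftrightarrow> (\<exists>n. (z, y) \<in> E ^^ n)"
  unfolding gdist_def by auto

lemma gdist_enat: "gdist E z y = enat m \<Longrightarrow> (z, y) \<in> E ^^ m \<and> (\<forall>n. (z, y) \<in> E ^^ n \<longrightarrow> m \<le> n)"
  unfolding gdist_def by (auto split: if_splits intro: LeastI Least_le)

lemma gdist_eqI: "(z, y) \<in> E ^^ m \<Longrightarrow> (\<forall>n. (z, y) \<in> E ^^ n \<longrightarrow> m \<le> n) \<Longrightarrow> gdist E z y = enat m"
  unfolding gdist_def by (auto intro!: Least_equality)

lemma gdist_mono: assumes "E \<subseteq> E'" shows "gdist E' z y \<le> gdist E z y"
proof (cases "gdist E z y")
  case (enat m)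
  then have m: "(z, y) \<in> E ^^ m" using gdist_enat by blast
  then have "(z, y) \<in> E' ^^ m" using relpow_mono'[OF assms] by blast
  then have "(LEAST n. (z, y) \<in> E' ^^ n) \<le> m" by (rule Least_le)
  moreover have "gdist E' z y = enat (LEAST n. (z, y) \<in> E' ^^ n)"
    unfolding gdist_def using \<open>(z, y) \<in> E' ^^ m\<close> by auto
  ultimately show ?thesis unfolding enat by simp
qed simp

lemma gdist_self: "gdist E z z = 0"
proof -
  have "gdist E z z = enat 0" by (rule gdist_eqI) auto
  then show ?thesis by (simp add: zero_enat_def)
qed

lemma gdist_ne0: "z \<noteq> y \<Longrightarrow> gdist E z y = enat m \<Longrightarrow> m \<ge> 1"
  using gdist_enat[of E z y m] by (cases m) auto

lemma gdist_ne1: "(z, y) \<notin> E \<Longrightarrow> gdist E z y = enat m \<Longrightarrow> m \<noteq> 1"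
  using gdist_enat[of E z y m] by auto

lemma gdist_char:
  assumes y: "y \<in> R" "h y = 0"
    and arcs: "\<And>u v. (u, v) \<in> E \<Longrightarrow> v \<in> R \<Longrightarrow> u \<in> R \<and> h u \<le> h v + 1"
    and step: "\<And>u. u \<in> R \<Longrightarrow> u \<noteq> y \<Longrightarrow> \<exists>v. (u, v) \<in> E \<and> v \<in> R \<and> h u = h v + 1"
  shows "gdist E u y = (if u \<in> R then enat (h u) else \<infinity>)"
proof -
  have A: "(u, y) \<in> E ^^ n \<Longrightarrow> u \<in> R \<and> h u \<le> n" for u n
  proof (induction n arbitrary: u)
    case 0
    then have "u = y" by simp
    then show ?case using y by simp
  next
    case (Suc n)
    obtain w where w: "(u, w) \<in> E" "(w, y) \<in> E ^^ n" using relpow_Suc_D2[OF Suc.prems] by blast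
    have "w \<in> R \<and> h w \<le> n" by (rule Suc.IH[OF w(2)])
    moreover have "w \<in> R \<Longrightarrow> u \<in> R \<and> h u \<le> h w + 1" using arcs w(1) by blast
    ultimately show ?case by linarith
  qed
  have B: "u \<in> R \<Longrightarrow> h u = n \<Longrightarrow> (u, y) \<in> E ^^ n" for u n
  proof (induction n arbitrary: u)
    case 0
    have "u = y"
    proof (rule ccontr)
      assume "u \<noteq> y"
      then obtain v where "h u = h v + 1" using step 0(1) by blast
      then show False using 0(2) by simp
    qed
    then show ?case using relpow_0_I[of y E] by simp
  next
    case (Suc n)
    then have "u \<noteq> y" using y by auto
    then obtain v where v: "(u, v) \<in> E" "v \<in> R" "h u = h v + 1" using step Suc.prems(1) by blast
    then have "h v = n" using Suc.prems(2) by simp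
    then have vy: "(v, y) \<in> E ^^ n" using Suc.IH v(2) by blast
    show ?case by (rule relpow_Suc_I2[OF v(1) vy])
  qed
  show ?thesis
  proof (cases "u \<in> R")
    case True
    have "gdist E u y = enat (h u)"
    proof (rule gdist_eqI)
      show "(u, y) \<in> E ^^ h u" using B True by blast
      show "\<forall>n. (u, y) \<in> E ^^ n \<longrightarrow> h u \<le> n" using A by blast
    qed
    then show ?thesis using True by simp
  next
    case False
    then have "\<not> (\<exists>n. (u, y) \<in> E ^^ n)" using A by blast
    then show ?thesis using False unfolding gdist_def by simp
  qed
qed

lemma lin_cent_char:
  assumes y: "y \<in> R" "h y = 0"
    and arcs: "\<And>u v. (u, v) \<in> E \<Longrightarrow> v \<in> R \<Longrightarrow> u \<in> R \<and> h u \<le> h v + 1"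
    and step: "\<And>u. u \<in> R \<Longrightarrow> u \<noteq> y \<Longrightarrow> \<exists>v. (u, v) \<in> E \<and> v \<in> R \<and> h u = h v + 1"
  shows "lin_cent a V E y = (\<Sum>z \<in> V \<inter> R. a (h z))"
proof -
  have g: "gdist E u y = (if u \<in> R then enat (h u) else \<infinity>)" for u
    by (rule gdist_char[OF assms])
  have "{z \<in> V. gdist E z y < \<infinity>} = V \<inter> R" using g by auto
  then show ?thesis unfolding lin_cent_def using g by (auto intro!: sum.cong)
qed

lemma anti:
  fixes i j :: nat
  assumes dec: "\<forall>i\<ge>1. a (i + 1) \<le> (a i :: real)" and "1 \<le> i" "i \<le> j"
  shows "a j \<le> a i"
  using assms(3)
proof (induction j rule: dec_induct)
  case base then show ?case by simp
next
  case (step j)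
  have "1 \<le> j" using step.hyps assms(2) by simp
  then have "a (j + 1) \<le> a j" using dec by blast
  then show ?case using step.IH by simp
qed

lemma gdist_arc: "x \<noteq> y \<Longrightarrow> (x, y) \<in> E \<Longrightarrow> gdist E x y = enat 1"
proof (rule gdist_eqI)
  assume "x \<noteq> y" "(x, y) \<in> E"
  then show "(x, y) \<in> E ^^ 1" by simp
  show "\<forall>n. (x, y) \<in> E ^^ n \<longrightarrow> 1 \<le> n"
  proof (intro allI impI)
    fix n assume "(x, y) \<in> E ^^ n"
    then show "1 \<le> n" using \<open>x \<noteq> y\<close> by (cases n) (auto elim: relpow_0_E)
  qed
qed

lemma sufficiency:
  fixes a :: "nat \<Rightarrow> real"
  assumes a0: "a 0 = 0" and pos: "\<forall>i. a i \<ge> 0" and dec: "\<forall>i\<ge>1. a (i + 1) \<le> a i"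
    and strict: "a 2 < a 1"
  shows "score_monotone (lin_cent a)"
  unfolding score_monotone_def
proof (intro allI impI, elim conjE)
  fix V E x y
  assume G: "is_graph V E" and xV: "x \<in> V" and yV: "y \<in> V" and xy: "x \<noteq> y" and nE: "(x, y) \<notin> E"
  define E' where "E' = insert (x, y) E"
  define S where "S = {z \<in> V. gdist E z y < \<infinity>}"
  define S' where "S' = {z \<in> V. gdist E' z y < \<infinity>}"
  define f where "f z = a (the_enat (gdist E z y))" for z
  define f' where "f' z = a (the_enat (gdist E' z y))" for z
  have fin: "finite V" using G unfolding is_graph_def by simp
  have mono: "gdist E' z y \<le> gdist E z y" for z by (rule gdist_mono) (auto simp: E'_def)
  have SS: "S \<subseteq> S'" unfolding S_def S'_def using mono le_less_trans by blast
  have finS: "finite S" "finite S'" using fin unfolding S_def S'_def by auto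
  have x1: "gdist E' x y = enat 1" using xy by (intro gdist_arc) (auto simp: E'_def)
  have f'x: "f' x = a 1" unfolding f'_def x1 by simp
  have pt: "f z \<le> f' z" if "z \<in> S" for z
  proof -
    have "gdist E z y < \<infinity>" using that unfolding S_def by simp
    then obtain m where m: "gdist E z y = enat m" by (rule less_infinityE)
    obtain m' where m': "gdist E' z y = enat m'" using mono[of z] m by (cases "gdist E' z y") auto
    have "m' \<le> m" using mono[of z] m m' by simp
    show ?thesis
    proof (cases "z = y")
      case True
      then show ?thesis unfolding f_def f'_def by (simp add: gdist_self)
    next
      case False
      then have "1 \<le> m'" using gdist_ne0 m' by blast
      then show ?thesis unfolding f_def f'_def m m' using anti[OF dec] \<open>m' \<le> m\<close> by simp
    qed
  qed
  have L: "lin_cent a V E y = sum f S" unfolding lin_cent_def S_def f_def ..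
  have L'0: "lin_cent a V E' y = sum f' S'" unfolding lin_cent_def S'_def f'_def ..
  have "sum f' S' = sum f' (S' - S) + sum f' S" by (rule sum.subset_diff[OF SS finS(2)])
  then have L': "lin_cent a V E' y = sum f' S + sum f' (S' - S)" using L'0 by simp
  have nn: "sum f' (S' - S) \<ge> 0" using pos unfolding f'_def by (simp add: sum_nonneg)
  have xS': "x \<in> S'" unfolding S'_def using xV x1 by simp
  show "lin_cent a V E y < lin_cent a V (insert (x, y) E) y"
  proof (cases "x \<in> S")
    case True
    have "gdist E x y < \<infinity>" using True unfolding S_def by simp
    then obtain m where m: "gdist E x y = enat m" by (rule less_infinityE)
    have "m \<noteq> 1" using gdist_ne1[OF nE m] .
    moreover have "m \<ge> 1" using gdist_ne0[OF xy m] .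
    ultimately have "m \<ge> 2" by simp
    then have "a m \<le> a 2" using anti[OF dec, of 2 m] by simp
    then have "f x < f' x" using strict unfolding f'x unfolding f_def m by simp
    then have "sum f S < sum f' S" using pt True finS by (intro sum_strict_mono_ex1) auto
    then show ?thesis using L L' nn unfolding E'_def by simp
  next
    case False
    have "f' x \<le> sum f' (S' - S)" using False xS' finS pos unfolding f'_def
      by (intro member_le_sum) auto
    moreover have "a 1 > 0" using strict pos[rule_format, of 2] by simp
    moreover have "sum f S \<le> sum f' S" using pt by (intro sum_mono) auto
    ultimately show ?thesis using L L' f'x unfolding E'_def by simp
  qed
qed

definition chainE :: "nat \<Rightarrow> nat \<Rightarrow> (nat \<times> nat) set" where
  "chainE n k = {(Suc j, j) | j. 1 \<le> j \<and> j < n} \<union> {(l, n) | l. n < l \<and> l \<le> n + k}"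

lemma gadgetA:
  fixes a :: "nat \<Rightarrow> real"
  assumes a0: "a 0 = 0" and sm: "score_monotone (lin_cent a)" and n: "1 \<le> n"
  shows "(\<Sum>z=0..n. a z) + real k * a (n + 1) > 0"
proof -
  define V where "V = {0..n+k}"
  define E where "E = chainE n k"
  have G: "is_graph V E" using n unfolding is_graph_def V_def E_def chainE_def by auto
  have nE: "(1, 0) \<notin> E" using n unfolding E_def chainE_def by auto
  have "lin_cent a V (insert (1, 0) E) 0 > lin_cent a V E 0"
    using sm G nE n unfolding score_monotone_def V_def by auto
  moreover have "lin_cent a V E 0 = (\<Sum>z \<in> V \<inter> {0}. a ((\<lambda>_. 0) z))"
    using n by (intro lin_cent_char) (auto simp: E_def chainE_def)
  moreover have "V \<inter> {0} = {0}" unfolding V_def by auto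
  moreover have "lin_cent a V (insert (1, 0) E) 0
      = (\<Sum>z \<in> V \<inter> V. a ((\<lambda>u. if u \<le> n then u else n + 1) z))"
  proof (rule lin_cent_char)
    show "0 \<in> V" unfolding V_def by simp
    show "(if (0::nat) \<le> n then 0 else n + 1) = 0" by simp
    show "u \<in> V \<and> (if u \<le> n then u else n + 1) \<le> (if v \<le> n then v else n + 1) + 1"
      if "(u, v) \<in> insert (1, 0) E" "v \<in> V" for u v
      using that n unfolding E_def chainE_def V_def by auto
    show "\<exists>v. (u, v) \<in> insert (1, 0) E \<and> v \<in> V \<and>
        (if u \<le> n then u else n + 1) = (if v \<le> n then v else n + 1) + 1"
      if "u \<in> V" "u \<noteq> 0" for u
    proof -
      have "u \<le> n + k" "u \<noteq> 0" using that unfolding V_def by auto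
      then have "u = 1 \<or> (2 \<le> u \<and> u \<le> n) \<or> n < u" by arith
      then consider "u = 1" | "2 \<le> u" "u \<le> n" | "n < u" by blast
      then show ?thesis
      proof cases
        case 1 then show ?thesis using n unfolding V_def by auto
      next
        case 2 then show ?thesis unfolding V_def E_def chainE_def
          by (intro exI[of _ "u - 1"]) auto
      next
        case 3 then show ?thesis using that unfolding V_def E_def chainE_def
          by (intro exI[of _ n]) auto
      qed
    qed
  qed
  moreover have "(\<Sum>z \<in> V. a (if z \<le> n then z else n + 1)) = (\<Sum>z=0..n. a z) + real k * a (n + 1)"
  proof -
    have "(\<Sum>z \<in> V. a (if z \<le> n then z else n + 1)) =
      (\<Sum>z=0..n. a (if z \<le> n then z else n + 1)) + (\<Sum>z=n+1..n+k. a (if z \<le> n then z else n + 1))"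
      unfolding V_def by (rule sum.ub_add_nat) simp
    also have "\<dots> = (\<Sum>z=0..n. a z) + (\<Sum>z=n+1..n+k. a (n + 1))"
      by (intro arg_cong2[where f="(+)"] sum.cong) auto
    finally show ?thesis by simp
  qed
  ultimately show ?thesis using a0 by simp
qed

lemma gadgetB:
  fixes a :: "nat \<Rightarrow> real"
  assumes a0: "a 0 = 0" and sm: "score_monotone (lin_cent a)" and n: "1 \<le> n"
  shows "(\<Sum>z=0..n. a z - a (if z = 0 then 0 else z + 1)) + real k * (a (n + 1) - a (n + 2)) > 0"
proof -
  define p where "p = n + k + 1"
  define V where "V = {0..n+k+1}"
  define E where "E = chainE n k \<union> {(1, p), (p, 0)}"
  define h where "h u = (if u = 0 then 0 else if u \<le> n then u + 1 else if u \<le> n + k then n + 2 else 1)" for u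
  define h' where "h' u = (if u \<le> n then u else if u \<le> n + k then n + 1 else 1)" for u
  have G: "is_graph V E" using n unfolding is_graph_def V_def E_def chainE_def p_def by auto
  have nE: "(1, 0) \<notin> E" using n unfolding E_def chainE_def p_def by auto
  have "lin_cent a V (insert (1, 0) E) 0 > lin_cent a V E 0"
    using sm G nE n unfolding score_monotone_def V_def by auto
  moreover have "lin_cent a V E 0 = (\<Sum>z \<in> V \<inter> V. a (h z))"
  proof (rule lin_cent_char)
    show "0 \<in> V" unfolding V_def by simp
    show "h 0 = 0" unfolding h_def by simp
    show "u \<in> V \<and> h u \<le> h v + 1" if "(u, v) \<in> E" "v \<in> V" for u v
      using that n unfolding E_def chainE_def V_def h_def p_def by auto
    show "\<exists>v. (u, v) \<in> E \<and> v \<in> V \<and> h u = h v + 1" if "u \<in> V" "u \<noteq> 0" for u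
    proof -
      have "u \<le> n + k + 1" "u \<noteq> 0" using that unfolding V_def by auto
      then have "u = 1 \<or> (2 \<le> u \<and> u \<le> n) \<or> (n < u \<and> u \<le> n + k) \<or> u = p"
        unfolding p_def by arith
      then consider "u = 1" | "2 \<le> u" "u \<le> n" | "n < u" "u \<le> n + k" | "u = p"
        by blast
      then show ?thesis
      proof cases
        case 1 then show ?thesis using n unfolding V_def E_def h_def p_def
          by (intro exI[of _ "n + k + 1"]) auto
      next
        case 2 then show ?thesis unfolding V_def E_def chainE_def h_def
          by (intro exI[of _ "u - 1"]) auto
      next
        case 3 then show ?thesis using n unfolding V_def E_def chainE_def h_def
          by (intro exI[of _ n]) auto
      next
        case 4 then show ?thesis unfolding V_def E_def h_def p_def
          by (intro exI[of _ 0]) auto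
      qed
    qed
  qed
  moreover have "lin_cent a V (insert (1, 0) E) 0 = (\<Sum>z \<in> V \<inter> V. a (h' z))"
  proof (rule lin_cent_char)
    show "0 \<in> V" unfolding V_def by simp
    show "h' 0 = 0" unfolding h'_def by simp
    show "u \<in> V \<and> h' u \<le> h' v + 1" if "(u, v) \<in> insert (1, 0) E" "v \<in> V" for u v
      using that n unfolding E_def chainE_def V_def h'_def p_def by auto
    show "\<exists>v. (u, v) \<in> insert (1, 0) E \<and> v \<in> V \<and> h' u = h' v + 1" if "u \<in> V" "u \<noteq> 0" for u
    proof -
      have "u \<le> n + k + 1" "u \<noteq> 0" using that unfolding V_def by auto
      then have "u = 1 \<or> (2 \<le> u \<and> u \<le> n) \<or> (n < u \<and> u \<le> n + k) \<or> u = p"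
        unfolding p_def by arith
      then consider "u = 1" | "2 \<le> u" "u \<le> n" | "n < u" "u \<le> n + k" | "u = p"
        by blast
      then show ?thesis
      proof cases
        case 1 then show ?thesis using n unfolding V_def E_def h'_def p_def
          by (intro exI[of _ 0]) auto
      next
        case 2 then show ?thesis unfolding V_def E_def chainE_def h'_def
          by (intro exI[of _ "u - 1"]) auto
      next
        case 3 then show ?thesis using n unfolding V_def E_def chainE_def h'_def
          by (intro exI[of _ n]) auto
      next
        case 4 then show ?thesis unfolding V_def E_def h'_def p_def
          by (intro exI[of _ 0]) auto
      qed
    qed
  qed
  moreover have split: "(\<Sum>z \<in> V. g z) = (\<Sum>z=0..n. g z) + (\<Sum>z=n+1..n+k. g z) + g p"
    for g :: "nat \<Rightarrow> real"
  proof -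
    have "(\<Sum>z \<in> V. g z) = (\<Sum>z=0..n+k. g z) + g p"
      unfolding V_def p_def by (simp add: sum.atLeast0_atMost_Suc)
    moreover have "(\<Sum>z=0..n+k. g z) = (\<Sum>z=0..n. g z) + (\<Sum>z=n+1..n+k. g z)"
      by (rule sum.ub_add_nat) simp
    ultimately show ?thesis by simp
  qed
  moreover have "(\<Sum>z=0..n. a (h z)) = (\<Sum>z=0..n. a (if z = 0 then 0 else z + 1))"
    unfolding h_def by (rule sum.cong) auto
  moreover have "(\<Sum>z=0..n. a (h' z)) = (\<Sum>z=0..n. a z)"
    unfolding h'_def by (rule sum.cong) auto
  moreover have "(\<Sum>z=n+1..n+k. a (h z)) = real k * a (n + 2)"
    unfolding h_def by (subst sum.cong[where h="\<lambda>_. a (n + 2)"]) auto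
  moreover have "(\<Sum>z=n+1..n+k. a (h' z)) = real k * a (n + 1)"
    unfolding h'_def by (subst sum.cong[where h="\<lambda>_. a (n + 1)"]) auto
  moreover have "h p = h' p" unfolding h_def h'_def p_def by simp
  ultimately show ?thesis by (simp add: sum_subtractf algebra_simps)
qed

lemma arch_nonneg:
  fixes C D :: real
  assumes "\<And>k::nat. 0 < C + real k * D"
  shows "D \<ge> 0"
proof (rule ccontr)
  assume "\<not> D \<ge> 0"
  then have "0 < - D" by simp
  then obtain k :: nat where "C < real k * (- D)" using ex_less_of_nat_mult by blast
  then have "C + real k * D < 0" by simp
  with assms[of k] show False by simp
qed

lemma necessity:
  fixes a :: "nat \<Rightarrow> real"
  assumes a0: "a 0 = 0" and sm: "score_monotone (lin_cent a)"
  shows "(\<forall>i. a i \<ge> 0) \<and> (\<forall>i. Delta a i \<le> 0) \<and> Delta a 1 < 0"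
proof -
  have s01: "{0..1::nat} = {0, 1}" by auto
  have a1: "a 1 > 0" using gadgetA[OF a0 sm, of 1 0] a0 unfolding s01 by simp
  have anz: "a (n + 1) \<ge> 0" if "1 \<le> n" for n
    using gadgetA[OF a0 sm that] by (intro arch_nonneg[of "\<Sum>z=0..n. a z"]) blast
  have a12: "a 2 < a 1" using gadgetB[OF a0 sm, of 1 0] a0 unfolding s01 by (simp add: numeral_2_eq_2)
  have dn: "a (n + 2) \<le> a (n + 1)" if "1 \<le> n" for n
  proof -
    have "a (n + 1) - a (n + 2) \<ge> 0"
      using gadgetB[OF a0 sm that]
      by (intro arch_nonneg[of "\<Sum>z=0..n. a z - a (if z = 0 then 0 else z + 1)"]) blast
    then show ?thesis by simp
  qed
  have pos: "a i \<ge> 0" for i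
  proof -
    consider "i = 0" | "i = 1" | "i \<ge> 2" by arith
    then show ?thesis
    proof cases
      case 1 then show ?thesis using a0 by simp
    next
      case 2 then show ?thesis using a1 by simp
    next
      case 3
      then have "a ((i - 1) + 1) \<ge> 0" by (intro anz) simp
      then show ?thesis using 3 by simp
    qed
  qed
  have dec: "Delta a i \<le> 0" for i
  proof -
    consider "i = 0" | "i = 1" | "i \<ge> 2" by arith
    then show ?thesis
    proof cases
      case 1 then show ?thesis unfolding Delta_def by simp
    next
      case 2 then show ?thesis using a12 unfolding Delta_def by (simp add: numeral_2_eq_2)
    next
      case 3
      then have "a ((i - 1) + 2) \<le> a ((i - 1) + 1)" by (intro dn) simp
      then show ?thesis using 3 unfolding Delta_def by simp
    qed
  qed
  show ?thesis using pos dec a12 unfolding Delta_def by (simp add: numeral_2_eq_2)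
qed

theorem proposition3:
  fixes a :: "nat \<Rightarrow> real"
  assumes "a 0 = 0"
  shows "(score_monotone (lin_cent a) \<longleftrightarrow>
            (\<forall>i. a i \<ge> 0) \<and> (\<forall>i. Delta a i \<le> 0) \<and> Delta a 1 < 0)
       \<and> ((\<forall>i. a i \<ge> 0) \<and> (\<forall>i. Delta a i \<le> 0) \<and> Delta a 1 < 0 \<longleftrightarrow>
            a 1 > a 2 \<and> (\<forall>i\<ge>1. a i \<ge> a (i + 1) \<and> a (i + 1) \<ge> 0))"
proof (rule conjI; rule iffI)
  assume "score_monotone (lin_cent a)"
  then show "(\<forall>i. a i \<ge> 0) \<and> (\<forall>i. Delta a i \<le> 0) \<and> Delta a 1 < 0"
    using necessity[of a, OF assms] by blast
next
  assume P: "(\<forall>i. a i \<ge> 0) \<and> (\<forall>i. Delta a i \<le> 0) \<and> Delta a 1 < 0"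
  have dec: "\<forall>i\<ge>1. a (i + 1) \<le> a i"
  proof (intro allI impI)
    fix i :: nat assume "1 \<le> i"
    then show "a (i + 1) \<le> a i" using P unfolding Delta_def by (auto dest: spec[of _ i])
  qed
  have "a 2 < a 1" using P unfolding Delta_def by (simp add: numeral_2_eq_2)
  then show "score_monotone (lin_cent a)"
    using sufficiency[of a, OF assms] P dec by blast
next
  assume P: "(\<forall>i. a i \<ge> 0) \<and> (\<forall>i. Delta a i \<le> 0) \<and> Delta a 1 < 0"
  have dec: "\<forall>i\<ge>1. a (i + 1) \<le> a i"
  proof (intro allI impI)
    fix i :: nat assume "1 \<le> i"
    then show "a (i + 1) \<le> a i" using P unfolding Delta_def by (auto dest: spec[of _ i])
  qed
  have "a 2 < a 1" using P unfolding Delta_def by (simp add: numeral_2_eq_2)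
  then show "a 1 > a 2 \<and> (\<forall>i\<ge>1. a i \<ge> a (i + 1) \<and> a (i + 1) \<ge> 0)"
    using P dec by auto
next
  assume Q: "a 1 > a 2 \<and> (\<forall>i\<ge>1. a i \<ge> a (i + 1) \<and> a (i + 1) \<ge> 0)"
  have pos: "a i \<ge> 0" for i
  proof (cases i)
    case 0 then show ?thesis using assms by simp
  next
    case (Suc j)
    show ?thesis
    proof (cases j)
      case 0 then show ?thesis using Q Suc by (auto dest: spec[of _ 1])
    next
      case (Suc l)
      then show ?thesis using Q \<open>i = Suc j\<close> by (auto dest: spec[of _ j])
    qed
  qed
  have dl: "Delta a i \<le> 0" for i
    using Q unfolding Delta_def by (cases "i = 0") (auto dest: spec[of _ i])
  show "(\<forall>i. a i \<ge> 0) \<and> (\<forall>i. Delta a i \<le> 0) \<and> Delta a 1 < 0"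
    using pos dl Q unfolding Delta_def by (simp add: numeral_2_eq_2)
qed

end
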